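(* Let $d\ge2$, $R>0$ and let $A\subset\mathbb{R}^d$ be a body. The following are equivalent: (i) $A$ is an $R$-supported body and $\mathrm{Nor}(A,a)\cap S^{d-1}=\mathcal{N}_R(A,a)$ for every $a\in\partial A$; (ii) $\mathrm{reach}(A)\ge R$.
   Context: A body is a nonempty closed subset of $\mathbb{R}^d$; $S^{d-1}$ is the unit sphere; $B(x)=\{y:|y-x|<R\}$. For $a\in\partial A$, $\mathcal{N}_R(A,a)=\{v\in S^{d-1}: A\cap B(a+Rv)=\emptyset\}$; $A$ is $R$-supported if $\mathcal{N}_R(A,a)\ne\emptyset$ for all $a\in\partial A$. Tangent cone: $\mathrm{Tan}(A,q)=\{v: \forall\varepsilon>0\ \exists x\in A,\ |x-q|<\varepsilon,\ \exists r>0,\ |r(x-q)-v|<\varepsilon\}$; normal cone: $\mathrm{Nor}(A,q)=\{u:\langle u,v\rangle\le0\ \forall v\in\mathrm{Tan}(A,q)\}$. $\mathrm{Unp}(A)$ is the set of points with a unique nearest point in $A$; $\mathrm{reach}(A,a)=\sup\{\rho>0: \{x:|x-a|<\rho\}\subset\mathrm{Unp}(A)\}$, $\mathrm{reach}(A)=\inf_{a\in A}\mathrm{reach}(A,a)$. *)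

theory Defs
  imports "HOL-Analysis.Analysis"
begin

definition body :: "'a::euclidean_space set \<Rightarrow> bool" where
  "body A \<longleftrightarrow> A \<noteq> {} \<and> closed A"

definition NR :: "real \<Rightarrow> 'a::euclidean_space set \<Rightarrow> 'a \<Rightarrow> 'a set" where
  "NR R A a = {v. norm v = 1 \<and> A \<inter> ball (a + R *\<^sub>R v) R = {}}"

definition R_supported :: "real \<Rightarrow> 'a::euclidean_space set \<Rightarrow> bool" where
  "R_supported R A \<longleftrightarrow> body A \<and> (\<forall>a\<in>frontier A. NR R A a \<noteq> {})"

definition Tan :: "'a::euclidean_space set \<Rightarrow> 'a \<Rightarrow> 'a set" where
  "Tan A q = {v. \<forall>\<epsilon>>0. \<exists>x\<in>A. norm (x - q) < \<epsilon> \<and>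
                    (\<exists>r>0. norm (r *\<^sub>R (x - q) - v) < \<epsilon>)}"

definition Nor :: "'a::euclidean_space set \<Rightarrow> 'a \<Rightarrow> 'a set" where
  "Nor A q = {u. \<forall>v\<in>Tan A q. inner u v \<le> 0}"

definition Unp :: "'a::euclidean_space set \<Rightarrow> 'a set" where
  "Unp A = {x. \<exists>!a. a \<in> A \<and> (\<forall>b\<in>A. dist x a \<le> dist x b)}"

text \<open>Local reach, in the extended reals (may be \<infinity>; Sup of the empty set is -\<infinity>,
  which behaves like 0 for comparisons with positive R).\<close>
definition reach_at :: "'a::euclidean_space set \<Rightarrow> 'a \<Rightarrow> ereal" where
  "reach_at A a = Sup {ereal \<rho> | \<rho>. \<rho> > 0 \<and> ball a \<rho> \<subseteq> Unp A}"

definition reach :: "'a::euclidean_space set \<Rightarrow> ereal" where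
  "reach A = (INF a\<in>A. reach_at A a)"

end

theory Submission
  imports Defs
begin


definition xi :: "'a::euclidean_space set \<Rightarrow> 'a \<Rightarrow> 'a" where
  "xi A x = (SOME a. a \<in> A \<and> infdist x A = dist x a)"

lemma xi_prop:
  fixes A :: "'a::euclidean_space set"
  assumes "closed A" "A \<noteq> {}"
  shows "xi A x \<in> A \<and> infdist x A = dist x (xi A x)"
proof -
  obtain a where "a \<in> A" "infdist x A = dist x a"
    using infdist_attains_inf[OF assms] by blast
  then show ?thesis unfolding xi_def by (rule someI[where P="\<lambda>a. a \<in> A \<and> infdist x A = dist x a", OF conjI])
qed

lemma unp_unique:
  fixes A :: "'a::euclidean_space set"
  assumes "x \<in> Unp A" "a \<in> A" "b \<in> A" "dist x a = infdist x A" "dist x b = infdist x A"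
  shows "a = b"
proof -
  have "\<forall>c\<in>A. dist x a \<le> dist x c" "\<forall>c\<in>A. dist x b \<le> dist x c"
    using assms(4,5) infdist_le[of _ A x] by auto
  then show ?thesis using assms(1-3) unfolding Unp_def by blast
qed

lemma unp_intro:
  fixes A :: "'a::euclidean_space set"
  assumes "closed A" "A \<noteq> {}"
    and H: "\<And>a b. a \<in> A \<Longrightarrow> b \<in> A \<Longrightarrow> dist x a = infdist x A \<Longrightarrow> dist x b = infdist x A \<Longrightarrow> a = b"
  shows "x \<in> Unp A"
proof -
  obtain a where a: "a \<in> A" "infdist x A = dist x a"
    using infdist_attains_inf[OF assms(1,2)] by blast
  have all: "\<forall>c\<in>A. dist x a \<le> dist x c" using a(2) infdist_le[of _ A x] by auto
  have uq: "b = a" if "b \<in> A" "\<forall>c\<in>A. dist x b \<le> dist x c" for b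
  proof -
    have "dist x b \<le> dist x a" using that a by auto
    moreover have "infdist x A \<le> dist x b" using that(1) by (rule infdist_le)
    ultimately have "dist x b = infdist x A" using a by linarith
    moreover have "dist x a = infdist x A" using a(2) by simp
    ultimately show ?thesis using H that(1) a(1) by blast
  qed
  show ?thesis unfolding Unp_def mem_Collect_eq
    apply (rule ex1I[of _ a])
    using a(1) all apply blast
    using uq by blast
qed

lemma reach_iff:
  fixes A :: "'a::euclidean_space set"
  assumes "body A" "R > 0"
  shows "ereal R \<le> reach A \<longleftrightarrow> (\<forall>x. infdist x A < R \<longrightarrow> x \<in> Unp A)"
proof
  assume h: "ereal R \<le> reach A"
  show "\<forall>x. infdist x A < R \<longrightarrow> x \<in> Unp A"
  proof (intro allI impI)
    fix x assume xr: "infdist x A < R"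
    have cl: "closed A" "A \<noteq> {}" using assms unfolding body_def by auto
    obtain a where a: "a \<in> A" "infdist x A = dist x a"
      using infdist_attains_inf[OF cl] by blast
    have "reach A \<le> reach_at A a" unfolding reach_def by (rule INF_lower[OF a(1)])
    moreover have "ereal (dist x a) < ereal R" using xr a(2) by simp
    ultimately have "ereal (dist x a) < reach_at A a" using h by (meson less_le_trans order_trans)
    then have "ereal (dist x a) < Sup {ereal \<rho> | \<rho>. \<rho> > 0 \<and> ball a \<rho> \<subseteq> Unp A}"
      unfolding reach_at_def .
    then obtain e where "e \<in> {ereal \<rho> | \<rho>. \<rho> > 0 \<and> ball a \<rho> \<subseteq> Unp A}" "ereal (dist x a) < e"
      using less_Sup_iff by blast
    then obtain \<rho> where "\<rho> > 0" "ball a \<rho> \<subseteq> Unp A" "dist x a < \<rho>" by auto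
    then show "x \<in> Unp A" by (auto simp: dist_commute)
  qed
next
  assume h: "\<forall>x. infdist x A < R \<longrightarrow> x \<in> Unp A"
  show "ereal R \<le> reach A" unfolding reach_def
  proof (rule INF_greatest)
    fix a assume a: "a \<in> A"
    have "ball a R \<subseteq> Unp A"
    proof
      fix y assume "y \<in> ball a R"
      then have "infdist y A < R" using infdist_le[OF a, of y] by (simp add: dist_commute)
      then show "y \<in> Unp A" using h by auto
    qed
    then have "ereal R \<in> {ereal \<rho> | \<rho>. \<rho> > 0 \<and> ball a \<rho> \<subseteq> Unp A}" using assms(2) by auto
    then show "ereal R \<le> reach_at A a" unfolding reach_at_def by (rule Sup_upper)
  qed
qed


lemma nsq_add:
  fixes p q :: "'a::real_inner"
  shows "(norm (p + q))^2 = (norm p)^2 + 2 * inner p q + (norm q)^2"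
  by (simp add: power2_norm_eq_inner inner_add_left inner_add_right inner_commute)

lemma nsq_diff:
  fixes p q :: "'a::real_inner"
  shows "(norm (p - q))^2 = (norm p)^2 - 2 * inner p q + (norm q)^2"
  by (simp add: power2_norm_eq_inner inner_diff_left inner_diff_right inner_commute)

lemma nearest_frontier:
  fixes A :: "'a::euclidean_space set"
  assumes "closed A" "x \<notin> A" "a \<in> A" "dist x a = infdist x A"
  shows "a \<in> frontier A"
proof -
  have "a \<notin> interior A"
  proof
    assume "a \<in> interior A"
    then obtain e where e: "e > 0" "ball a e \<subseteq> A" using mem_interior by blast
    define s where "s = dist x a"
    have s: "s > 0" using assms(2,3) unfolding s_def by auto
    define th where "th = min e s / 2"
    have th: "0 < th" "th < e" "th < s" using e s unfolding th_def by auto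
    define y where "y = a + (th / s) *\<^sub>R (x - a)"
    have "norm (x - a) = s" unfolding s_def by (simp add: dist_norm)
    then have "dist a y = th" unfolding y_def dist_norm using s th by simp
    then have "y \<in> A" using e th by auto
    have "x - y = (1 - th / s) *\<^sub>R (x - a)" unfolding y_def by (simp add: algebra_simps)
    then have "dist x y = (1 - th/s) * s" using s th
      by (simp add: dist_norm s_def)
    also have "\<dots> = s - th" using s by (simp add: field_simps)
    finally have "dist x y < infdist x A" using th assms(4) s_def by simp
    then show False using infdist_le[OF \<open>y \<in> A\<close>, of x] by simp
  qed
  then show ?thesis unfolding frontier_def using assms(1,3) closure_closed by auto
qed

lemma NR_Nor:
  fixes A :: "'a::euclidean_space set"
  assumes s: "s > 0" and v: "norm v = 1" and B: "ball (a + s *\<^sub>R v) s \<inter> A = {}"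
  shows "v \<in> Nor A a"
  unfolding Nor_def mem_Collect_eq
proof
  fix w assume w: "w \<in> Tan A a"
  show "inner v w \<le> 0"
  proof (rule ccontr)
    assume "\<not> inner v w \<le> 0"
    then have eta: "inner v w > 0" by simp
    define et where "et = inner v w"
    have "w \<noteq> 0" using eta by auto
    define nw where "nw = norm w"
    have nw: "nw > 0" using \<open>w \<noteq> 0\<close> unfolding nw_def by simp
    define eps where "eps = min (nw/2) (min (et/2) (2 * s * et / (9 * nw)))"
    have ep: "eps > 0" "eps \<le> nw/2" "eps \<le> et/2" "eps \<le> 2 * s * et / (9 * nw)"
      using nw eta s unfolding eps_def et_def by auto
    obtain x r where x: "x \<in> A" "norm (x - a) < eps" "r > 0" "norm (r *\<^sub>R (x - a) - w) < eps"
      using w ep(1) unfolding Tan_def by blast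
    define u where "u = x - a"
    define e where "e = r *\<^sub>R u - w"
    have ne: "norm e < eps" using x unfolding e_def u_def by simp
    have ru: "r *\<^sub>R u = w + e" unfolding e_def by simp
    have n1: "norm (r *\<^sub>R u) < 3*nw/2"
    proof -
      have "norm (r *\<^sub>R u) \<le> norm w + norm e" unfolding ru by (rule norm_triangle_ineq)
      then show ?thesis using ne ep nw_def by simp
    qed
    have n2: "norm (r *\<^sub>R u) > nw - eps"
    proof -
      have "norm w \<le> norm (r *\<^sub>R u) + norm e"
        using norm_triangle_ineq[of "r *\<^sub>R u" "- e"] ru by (simp add: algebra_simps)
      then show ?thesis using ne nw_def by simp
    qed
    have "norm (r *\<^sub>R u) = r * norm u" using x(3) by simp
    also have "\<dots> < r * eps" using x(2,3) unfolding u_def by simp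
    finally have "r * eps > nw / 2" using n2 ep by linarith
    then have rb: "r > nw / (2*eps)" using ep(1) by (simp add: field_simps)
    have iv: "inner (r *\<^sub>R u) v > et/2"
    proof -
      have "inner (r *\<^sub>R u) v = et + inner e v" unfolding ru et_def inner_add_left using inner_commute[of v w] by simp
      moreover have "\<bar>inner e v\<bar> \<le> norm e" using Cauchy_Schwarz_ineq2[of e v] v by simp
      ultimately show ?thesis using ne ep by linarith
    qed
    have a1: "2 * s * (nw / (2*eps)) < 2 * s * r" by (rule mult_strict_left_mono[OF rb]) (use s in simp)
    have a2: "0 < 2 * s * r" using s x(3) by simp
    have a3: "0 \<le> et/2" using eta et_def by simp
    have "(2 * s * (nw / (2*eps))) * (et/2) < (2 * s * r) * inner (r *\<^sub>R u) v"
      by (rule mult_strict_mono[OF a1 iv a2 a3])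
    then have c1: "2 * s * (nw / (2*eps)) * (et/2) < 2 * s * r * inner (r *\<^sub>R u) v" by simp
    have c2: "2 * s * (nw / (2*eps)) * (et/2) = s * nw * et / (2 * eps)" by (simp add: field_simps)
    have c3: "9 * nw^2 / 4 \<le> s * nw * et / (2 * eps)"
    proof -
      have "eps * (9*nw) \<le> 2 * s * et" using ep(4) nw by (simp add: field_simps)
      then show ?thesis using ep(1) nw by (simp add: field_simps power2_eq_square)
    qed
    have c4: "9 * nw^2 / 4 = (3*nw/2)^2" by (simp add: power2_eq_square)
    have c5: "(norm (r *\<^sub>R u))^2 < (3*nw/2)^2" using n1 by (intro power_strict_mono) auto
    have key: "(norm (r *\<^sub>R u))^2 < 2 * s * r * inner (r *\<^sub>R u) v" using c1 c2 c3 c4 c5 by linarith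
    have "(norm (r *\<^sub>R u))^2 = r^2 * (norm u)^2" by (simp add: power_mult_distrib)
    moreover have "2 * s * r * inner (r *\<^sub>R u) v = r^2 * (2 * s * inner u v)"
      by (simp add: power2_eq_square algebra_simps)
    ultimately have "r^2 * (norm u)^2 < r^2 * (2 * s * inner u v)" using key by metis
    then have k2: "(norm u)^2 < 2 * s * inner u v" using x(3)
      by (meson mult_less_cancel_left_pos zero_less_power)
    have "(norm (x - (a + s *\<^sub>R v)))^2 = (norm (u - s *\<^sub>R v))^2" unfolding u_def by (simp add: algebra_simps)
    also have "\<dots> = (norm u)^2 - 2 * s * inner u v + s^2" using v by (simp add: nsq_diff)
    also have "\<dots> < s^2" using k2 by simp
    finally have "norm (x - (a + s *\<^sub>R v)) < s" using s
      by (meson abs_le_square_iff abs_norm_cancel linorder_not_less order_less_imp_le power2_less_imp_less)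
    then have "x \<in> ball (a + s *\<^sub>R v) s" by (simp add: dist_norm norm_minus_commute)
    then show False using B x(1) by blast
  qed
qed


lemma i_to_H:
  fixes A :: "'a::euclidean_space set"
  assumes body: "body A" and R: "R > 0"
    and N: "\<forall>a\<in>frontier A. Nor A a \<inter> sphere 0 1 = NR R A a"
  shows "\<forall>x. infdist x A < R \<longrightarrow> x \<in> Unp A"
proof (intro allI impI)
  fix x assume xR: "infdist x A < R"
  have cl: "closed A" "A \<noteq> {}" using body unfolding body_def by auto
  show "x \<in> Unp A"
  proof (rule unp_intro[OF cl])
    fix a b assume a: "a \<in> A" and b: "b \<in> A" and da: "dist x a = infdist x A" and db: "dist x b = infdist x A"
    show "a = b"
    proof (cases "x \<in> A")
      case True
      then show ?thesis using da db by simp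
    next
      case False
      define s where "s = infdist x A"
      have s: "s > 0" unfolding s_def using infdist_pos_not_in_closed[OF cl False] .
      define v where "v = (1/s) *\<^sub>R (x - a)"
      have nxa: "norm (x - a) = s" using da s_def by (simp add: dist_norm)
      have v1: "norm v = 1" unfolding v_def using nxa s by simp
      have xv: "a + s *\<^sub>R v = x" unfolding v_def using s by simp
      have B: "ball (a + s *\<^sub>R v) s \<inter> A = {}"
      proof -
        have "y \<notin> A" if "y \<in> ball x s" for y
          using that infdist_le[of y A x] s_def by auto
        then show ?thesis using xv by auto
      qed
      have vN: "v \<in> Nor A a" by (rule NR_Nor[OF s v1 B])
      have af: "a \<in> frontier A" by (rule nearest_frontier[OF cl(1) False a da])
      have fa: "Nor A a \<inter> sphere 0 1 = NR R A a" using N af by blast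
      have "v \<in> Nor A a \<inter> sphere 0 1" using vN v1 by simp
      then have "v \<in> NR R A a" using fa by simp
      then have BR: "ball (a + R *\<^sub>R v) R \<inter> A = {}" unfolding NR_def by auto
      show "a = b"
      proof (rule ccontr)
        assume ab: "a \<noteq> b"
        define k where "k = inner (b - x) v"
        have nbx: "norm (b - x) = s" using db s_def by (simp add: dist_norm norm_minus_commute)
        have "(norm (b - a))^2 = (norm ((b - x) + s *\<^sub>R v))^2" by (simp add: xv[symmetric] algebra_simps)
        also have "\<dots> = 2 * s * (s + k)" unfolding nsq_add k_def using nbx v1 s
          by (simp add: power2_eq_square algebra_simps)
        finally have e1: "(norm (b - a))^2 = 2 * s * (s + k)" .
        have "norm (b - a) > 0" using ab by simp
        then have "s + k > 0" using e1 s by (metis zero_less_mult_pos zero_less_power mult_pos_pos zero_less_numeral)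
        have "(norm (b - (a + R *\<^sub>R v)))^2 = (norm ((b - x) - (R - s) *\<^sub>R v))^2"
          by (simp add: xv[symmetric] algebra_simps)
        also have "\<dots> = R^2 - 2 * (R - s) * (s + k)"
        proof -
          have i1: "inner (b - x) ((R - s) *\<^sub>R v) = (R - s) * k" by (simp add: k_def)
          have i2: "(norm ((R - s) *\<^sub>R v))^2 = (R - s)^2" using v1 by (simp add: power2_abs)
          show ?thesis unfolding nsq_diff i1 i2 nbx by (simp add: power2_eq_square algebra_simps)
        qed
        finally have e2: "(norm (b - (a + R *\<^sub>R v)))^2 = R^2 - 2 * (R - s) * (s + k)" .
        have "R - s > 0" using xR s_def by simp
        then have "(norm (b - (a + R *\<^sub>R v)))^2 < R^2" using e2 \<open>s + k > 0\<close> by simp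
        then have "norm (b - (a + R *\<^sub>R v)) < R" using R
          by (meson abs_le_square_iff abs_norm_cancel linorder_not_less order_less_imp_le power2_less_imp_less)
        then have "b \<in> ball (a + R *\<^sub>R v) R" by (simp add: dist_norm norm_minus_commute)
        then show False using BR b by blast
      qed
    qed
  qed
qed


lemma xi_unique:
  fixes A :: "'a::euclidean_space set"
  assumes "closed A" "A \<noteq> {}" "x \<in> Unp A" "a \<in> A" "dist x a = infdist x A"
  shows "a = xi A x"
  using unp_unique[OF assms(3,4) _ assms(5)] xi_prop[OF assms(1,2), of x] by auto

lemma xi_cont:
  fixes A :: "'a::euclidean_space set"
  assumes cl: "closed A" "A \<noteq> {}" and K: "K \<subseteq> Unp A"
  shows "continuous_on K (xi A)"
  unfolding continuous_on_iff
proof (rule ccontr)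
  assume "\<not> (\<forall>x\<in>K. \<forall>e>0. \<exists>d>0. \<forall>x'\<in>K. dist x' x < d \<longrightarrow> dist (xi A x') (xi A x) < e)"
  then obtain y e where y: "y \<in> K" and e: "e > 0"
    and bad0: "\<forall>d>0. \<exists>x'\<in>K. dist x' y < d \<and> \<not> dist (xi A x') (xi A y) < e"
    by blast
  note bad = bad0[rule_format]
  have "\<forall>n. \<exists>x'. x' \<in> K \<and> dist x' y < 1 / Suc n \<and> dist (xi A x') (xi A y) \<ge> e"
  proof
    fix n
    have "(1::real) / Suc n > 0" by simp
    then show "\<exists>x'. x' \<in> K \<and> dist x' y < 1 / Suc n \<and> dist (xi A x') (xi A y) \<ge> e"
      using bad[of "1 / Suc n"] by (auto simp: not_less)
  qed
  then obtain X where X: "\<And>n. X n \<in> K" "\<And>n. dist (X n) y < 1 / Suc n" "\<And>n. dist (xi A (X n)) (xi A y) \<ge> e"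
    by metis
  have Xl: "X \<longlonglongrightarrow> y"
    unfolding lim_sequentially
  proof (intro allI impI)
    fix r :: real assume "r > 0"
    then obtain N :: nat where N: "1 / r < N" using reals_Archimedean2 by blast
    have "dist (X n) y < r" if "n \<ge> N" for n
    proof -
      have "1 / r < Suc n" using N that by linarith
      then have "1 / Suc n < r" using \<open>r > 0\<close> by (simp add: field_simps)
      then show ?thesis using X(2)[of n] by linarith
    qed
    then show "\<exists>no. \<forall>n\<ge>no. dist (X n) y < r" by blast
  qed
  define c where "c n = xi A (X n)" for n
  have cA: "c n \<in> A" "dist (X n) (c n) = infdist (X n) A" for n
    using xi_prop[OF cl, of "X n"] unfolding c_def by auto
  have "c n \<in> cball y (infdist y A + 2)" for n
  proof -
    have "(1::real) / Suc n \<le> 1" by (simp add: divide_le_eq_1)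
    then have d1: "dist (X n) y < 1" using X(2)[of n] by linarith
    have "infdist (X n) A \<le> infdist y A + dist (X n) y" by (rule infdist_triangle)
    moreover have "dist y (c n) \<le> dist y (X n) + dist (X n) (c n)" by (rule dist_triangle)
    ultimately show ?thesis using d1 cA(2)[of n] by (simp add: dist_commute)
  qed
  then obtain l r where l: "l \<in> cball y (infdist y A + 2)" "strict_mono r" "(c \<circ> r) \<longlonglongrightarrow> l"
    using seq_compactE[OF compact_imp_seq_compact[OF compact_cball]] by metis
  have lA: "l \<in> A" using closed_sequentially[OF cl(1) _ l(3)] cA(1) by auto
  have Xr: "(X \<circ> r) \<longlonglongrightarrow> y" using LIMSEQ_subseq_LIMSEQ[OF Xl l(2)] .
  have t1: "(\<lambda>n. dist ((X \<circ> r) n) ((c \<circ> r) n)) \<longlonglongrightarrow> dist y l"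
    by (intro tendsto_dist Xr l(3))
  have t2: "(\<lambda>n. infdist ((X \<circ> r) n) A) \<longlonglongrightarrow> infdist y A"
    by (intro tendsto_infdist Xr)
  have "(\<lambda>n. dist ((X \<circ> r) n) ((c \<circ> r) n)) = (\<lambda>n. infdist ((X \<circ> r) n) A)"
    using cA(2) by auto
  then have "dist y l = infdist y A" using t1 t2 LIMSEQ_unique by metis
  then have "l = xi A y" using xi_unique[OF cl _ lA] K y by auto
  moreover have "dist l (xi A y) \<ge> e"
  proof (rule LIMSEQ_le_const)
    show "(\<lambda>n. dist ((c \<circ> r) n) (xi A y)) \<longlonglongrightarrow> dist l (xi A y)" by (intro tendsto_intros l(3))
    show "\<exists>N. \<forall>n\<ge>N. e \<le> dist ((c \<circ> r) n) (xi A y)" using X(3) unfolding c_def by auto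
  qed
  ultimately show False using e by simp
qed


lemma sphere_cluster:
  fixes f :: "nat \<Rightarrow> 'a::euclidean_space"
  assumes "\<And>n. norm (f n) = 1"
  shows "\<exists>w. norm w = 1 \<and> (\<forall>e>0. \<forall>N. \<exists>n\<ge>N. dist (f n) w < e)"
proof -
  have "\<forall>n. f n \<in> sphere 0 1" using assms by simp
  then obtain l r where l: "l \<in> sphere 0 1" "strict_mono r" "(f \<circ> r) \<longlonglongrightarrow> l"
    using seq_compactE[OF compact_imp_seq_compact[OF compact_sphere]] by metis
  have "\<exists>n\<ge>N. dist (f n) l < e" if "e > 0" for e N
  proof -
    obtain M where M: "\<forall>n\<ge>M. dist ((f \<circ> r) n) l < e" using l(3) \<open>e > 0\<close> unfolding lim_sequentially by blast
    have "r (max M N) \<ge> max M N" using seq_suble[OF l(2)] by blast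
    then show ?thesis using M[rule_format, of "max M N"] by (intro exI[of _ "r (max M N)"]) auto
  qed
  then show ?thesis using l(1) by auto
qed

lemma extend:
  fixes A :: "'a::euclidean_space set"
  assumes cl: "closed A" "A \<noteq> {}" and H: "\<forall>x. infdist x A < R \<longrightarrow> x \<in> Unp A"
    and b: "b \<in> A" and u: "norm u = 1" and T: "T > 0"
    and dz: "infdist (b + T *\<^sub>R u) A = T" and ta: "\<tau> > 0" "\<tau> < T" "T + \<tau> < R"
  shows "infdist (b + (T + \<tau>) *\<^sub>R u) A = T + \<tau>"
proof -
  define z where "z = b + T *\<^sub>R u"
  define K where "K = cball z \<tau>"
  have dzb: "dist z b = T" unfolding z_def using u T by (simp add: dist_norm)
  have lo: "infdist y A \<ge> T - \<tau>" if "y \<in> K" for y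
  proof -
    have "infdist z A \<le> infdist y A + dist z y" by (rule infdist_triangle)
    then show ?thesis using that dz unfolding K_def z_def by simp
  qed
  have hi: "infdist y A \<le> dist y b" for y using infdist_le[OF b] .
  have hi2: "dist y b \<le> \<tau> + T" if "y \<in> K" for y
    using dist_triangle[of y b z] that dzb unfolding K_def by (simp add: dist_commute)
  have KU: "K \<subseteq> Unp A"
  proof
    fix y assume "y \<in> K"
    then have "infdist y A < R" using hi[of y] hi2[of y] ta by linarith
    then show "y \<in> Unp A" using H by auto
  qed
  have dpos: "infdist y A > 0" if "y \<in> K" for y using lo[OF that] ta by linarith
  define p where "p y = xi A y + ((T + \<tau>) / infdist y A) *\<^sub>R (y - xi A y)" for y
  define F where "F y = z + (\<tau> / max \<tau> (norm (p y - z))) *\<^sub>R (p y - z)" for y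
  have cxi: "continuous_on K (xi A)" by (rule xi_cont[OF cl KU])
  have cd: "continuous_on K (\<lambda>y. infdist y A)" by (intro continuous_intros)
  have cp: "continuous_on K p" unfolding p_def
    by (intro continuous_intros cxi cd) (metis dpos less_irrefl)
  have cF: "continuous_on K F" unfolding F_def
    by (intro continuous_intros cp) (use ta in auto)
  have FK: "F \<in> K \<rightarrow> K"
  proof
    fix y assume "y \<in> K"
    have "norm ((\<tau> / max \<tau> (norm (p y - z))) *\<^sub>R (p y - z)) = \<tau> / max \<tau> (norm (p y - z)) * norm (p y - z)"
      using ta by simp
    also have "\<dots> \<le> \<tau>" using ta by (simp add: field_simps)
    finally show "F y \<in> K" unfolding F_def K_def by (simp add: dist_norm)
  qed
  obtain y where yK: "y \<in> K" and fixy: "F y = y"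
    using brouwer[of K F] cF FK ta unfolding K_def by auto
  define c where "c = xi A y"
  define dd where "dd = infdist y A"
  have cA: "c \<in> A" and dyc: "dd = dist y c" using xi_prop[OF cl, of y] unfolding c_def dd_def by auto
  have ddp: "dd > 0" using dpos[OF yK] dd_def by simp
  define q where "q = y - c"
  have nq: "norm q = dd" unfolding q_def using dyc by (simp add: dist_norm)
  have ge: "dd \<ge> T + \<tau>"
  proof (rule ccontr)
    assume "\<not> dd \<ge> T + \<tau>"
    then have lt: "dd < T + \<tau>" by simp
    define P where "P = p y"
    define \<beta> where "\<beta> = (T + \<tau>) / dd - 1"
    have bpos: "\<beta> > 0" unfolding \<beta>_def using lt ddp by (simp add: field_simps)
    have Py: "P - y = \<beta> *\<^sub>R q"
      unfolding P_def p_def \<beta>_def q_def c_def[symmetric] dd_def[symmetric] by (simp add: algebra_simps)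
    show False
    proof (cases "norm (P - z) \<le> \<tau>")
      case True
      then have "F y = P" unfolding F_def P_def[symmetric] using ta by simp
      then have "P - y = 0" using fixy by simp
      then have "\<beta> *\<^sub>R q = 0" using Py by simp
      then show False using bpos nq ddp by auto
    next
      case False
      define m where "m = norm (P - z)"
      have m: "m > \<tau>" using False m_def by simp
      have yz: "y - z = (\<tau> / m) *\<^sub>R (P - z)"
        using fixy unfolding F_def P_def[symmetric] m_def[symmetric] using m by (simp add: max_def algebra_simps)
      have "P \<noteq> z" using m m_def ta by auto
      then have nyz: "norm (y - z) = \<tau>" unfolding yz using m ta m_def by simp
      have Pz: "P - z = (m / \<tau>) *\<^sub>R (y - z)" unfolding yz using m ta by simp
      define \<alpha> where "\<alpha> = m / \<tau> - 1"
      have "P - y = \<alpha> *\<^sub>R (y - z)"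
      proof -
        have "P - y = (P - z) - (y - z)" by simp
        also have "\<dots> = \<alpha> *\<^sub>R (y - z)" unfolding Pz \<alpha>_def by (simp add: algebra_simps)
        finally show ?thesis .
      qed
      then have "\<beta> *\<^sub>R q = \<alpha> *\<^sub>R (y - z)" using Py by simp
      then have qe0: "(1 / \<beta>) *\<^sub>R (\<beta> *\<^sub>R q) = (1 / \<beta>) *\<^sub>R (\<alpha> *\<^sub>R (y - z))" by simp
      have qe: "q = (\<alpha> / \<beta>) *\<^sub>R (y - z)" using qe0 bpos by simp
      define \<kappa> where "\<kappa> = \<alpha> / \<beta>"
      have "norm q = \<bar>\<kappa>\<bar> * \<tau>" unfolding qe \<kappa>_def[symmetric] using nyz by simp
      then have ddk: "dd = \<bar>\<kappa>\<bar> * \<tau>" using nq by simp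
      have "c - z = (1 - \<kappa>) *\<^sub>R (y - z)"
        using qe unfolding q_def \<kappa>_def[symmetric] by (simp add: algebra_simps)
      then have "dist z c = \<bar>1 - \<kappa>\<bar> * \<tau>" using nyz by (simp add: dist_norm norm_minus_commute)
      also have "\<dots> = \<bar>\<tau> - dd\<bar>"
      proof -
        have "\<alpha> > 0" unfolding \<alpha>_def using m ta by (simp add: field_simps)
        then have "\<kappa> > 0" unfolding \<kappa>_def using bpos by simp
        then have "dd = \<kappa> * \<tau>" using ddk by simp
        moreover have "\<bar>1 - \<kappa>\<bar> * \<tau> = \<bar>(1 - \<kappa>) * \<tau>\<bar>" using ta by (simp add: abs_mult)
        ultimately show ?thesis by (simp add: algebra_simps)
      qed
      finally have dzc: "dist z c = \<bar>\<tau> - dd\<bar>" .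
      have "infdist z A \<le> dist z c" by (rule infdist_le[OF cA])
      moreover have "infdist z A = T" using dz z_def by simp
      moreover have "dd \<ge> T - \<tau>" using lo[OF yK] dd_def by simp
      ultimately show False using dzc lt ta by linarith
    qed
  qed
  have dyb: "dist y b \<le> \<tau> + T" by (rule hi2[OF yK])
  have dyz: "dist y z \<le> \<tau>" using yK unfolding K_def by (simp add: dist_commute)
  have eq1: "dd = T + \<tau>" using ge hi[of y] dyb dd_def by linarith
  have "dist y b = T + \<tau>" using ge hi[of y] dyb dd_def by linarith
  then have nyb: "norm ((y - z) + (z - b)) = norm (y - z) + norm (z - b)"
    using dyz dist_triangle[of y b z] dzb by (simp add: dist_norm)
  have nyz: "norm (y - z) = \<tau>" using dyz dist_triangle[of y b z] dzb \<open>dist y b = T + \<tau>\<close>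
    by (simp add: dist_norm)
  have "norm (y - z) *\<^sub>R (z - b) = norm (z - b) *\<^sub>R (y - z)" using nyb norm_triangle_eq by blast
  then have "\<tau> *\<^sub>R (T *\<^sub>R u) = T *\<^sub>R (y - z)" using nyz dzb unfolding z_def by (simp add: dist_norm)
  then have "(1 / T) *\<^sub>R (\<tau> *\<^sub>R (T *\<^sub>R u)) = (1 / T) *\<^sub>R (T *\<^sub>R (y - z))" by simp
  then have "y - z = \<tau> *\<^sub>R u" using T by simp
  then have "y = b + (T + \<tau>) *\<^sub>R u" unfolding z_def by (simp add: algebra_simps)
  then show ?thesis using eq1 dd_def by simp
qed


lemma down:
  fixes A :: "'a::euclidean_space set"
  assumes b: "b \<in> A" and u: "norm u = 1" and d: "infdist (b + t *\<^sub>R u) A = t" and t: "0 \<le> t'" "t' \<le> t"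
  shows "infdist (b + t' *\<^sub>R u) A = t'"
proof -
  have "infdist (b + t' *\<^sub>R u) A \<le> dist (b + t' *\<^sub>R u) b" by (rule infdist_le[OF b])
  also have "\<dots> = t'" using u t by (simp add: dist_norm)
  finally have 1: "infdist (b + t' *\<^sub>R u) A \<le> t'" .
  have "infdist (b + t *\<^sub>R u) A \<le> infdist (b + t' *\<^sub>R u) A + dist (b + t *\<^sub>R u) (b + t' *\<^sub>R u)"
    by (rule infdist_triangle)
  moreover have "dist (b + t *\<^sub>R u) (b + t' *\<^sub>R u) = t - t'"
  proof -
    have "(b + t *\<^sub>R u) - (b + t' *\<^sub>R u) = (t - t') *\<^sub>R u" by (simp add: algebra_simps)
    then show ?thesis using u t by (simp add: dist_norm)
  qed
  ultimately show ?thesis using 1 d by linarith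
qed

lemma ray:
  fixes A :: "'a::euclidean_space set"
  assumes cl: "closed A" "A \<noteq> {}" and H: "\<forall>x. infdist x A < R \<longrightarrow> x \<in> Unp A"
    and b: "b \<in> A" and u: "norm u = 1" and s: "s > 0" "s < R" and d: "infdist (b + s *\<^sub>R u) A = s"
    and t0: "0 \<le> t0" "t0 < R"
  shows "infdist (b + t0 *\<^sub>R u) A = t0"
proof (rule ccontr)
  assume nt: "infdist (b + t0 *\<^sub>R u) A \<noteq> t0"
  have st: "s < t0"
  proof (rule ccontr)
    assume "\<not> s < t0"
    then show False using down[OF b u d t0(1)] nt by simp
  qed
  define S where "S = {t. 0 \<le> t \<and> t \<le> t0 \<and> infdist (b + t *\<^sub>R u) A = t}"
  have "S = {t. 0 \<le> t} \<inter> {t. t \<le> t0} \<inter> {t. infdist (b + t *\<^sub>R u) A = t}" unfolding S_def by auto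
  moreover have "closed {t. infdist (b + t *\<^sub>R u) A = t}"
    by (intro closed_Collect_eq continuous_intros)
  ultimately have cS: "closed S" by (simp add: closed_Int closed_Collect_le)
  have sS: "s \<in> S" unfolding S_def using s st d by simp
  have bS: "bdd_above S" unfolding S_def by (auto intro: bdd_aboveI[of _ t0])
  define T where "T = Sup S"
  have TS: "T \<in> S" unfolding T_def using closed_contains_Sup[OF _ bS cS] sS by auto
  have sT: "s \<le> T" unfolding T_def using cSup_upper[OF sS bS] .
  have TS': "0 \<le> T" "T \<le> t0" "infdist (b + T *\<^sub>R u) A = T" using TS unfolding S_def by auto
  have Tt0: "T < t0" using TS' nt le_less by blast
  define \<tau> where "\<tau> = min (T/2) (min ((R - T)/2) (t0 - T))"
  have ta: "\<tau> > 0" "\<tau> < T" "T + \<tau> < R" "T + \<tau> \<le> t0"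
    unfolding \<tau>_def using sT s Tt0 t0 by auto
  have "infdist (b + (T + \<tau>) *\<^sub>R u) A = T + \<tau>"
    by (rule extend[OF cl H b u _ TS'(3) ta(1,2,3)]) (use sT s in linarith)
  then have "T + \<tau> \<in> S" unfolding S_def using ta TS' by simp
  then have "T + \<tau> \<le> T" unfolding T_def using cSup_upper[OF _ bS] by blast
  then show False using ta by simp
qed

lemma ray_ball:
  fixes A :: "'a::euclidean_space set"
  assumes cl: "closed A" "A \<noteq> {}" and H: "\<forall>x. infdist x A < R \<longrightarrow> x \<in> Unp A"
    and b: "b \<in> A" and u: "norm u = 1" and s: "s > 0" "s < R" and d: "infdist (b + s *\<^sub>R u) A = s"
  shows "ball (b + R *\<^sub>R u) R \<inter> A = {}"
proof -
  have "y \<notin> A" if y: "y \<in> ball (b + R *\<^sub>R u) R" for y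
  proof
    assume yA: "y \<in> A"
    define \<delta> where "\<delta> = dist (b + R *\<^sub>R u) y"
    have dl: "\<delta> < R" "0 \<le> \<delta>" using y unfolding \<delta>_def by auto
    define t where "t = (3 * R + \<delta>) / 4"
    have t: "0 \<le> t" "t < R" "t > (R + \<delta>)/2" unfolding t_def using dl by auto
    have dt: "infdist (b + t *\<^sub>R u) A = t" by (rule ray[OF cl H b u s d t(1,2)])
    have "dist (b + t *\<^sub>R u) (b + R *\<^sub>R u) = R - t"
    proof -
      have "(b + t *\<^sub>R u) - (b + R *\<^sub>R u) = (t - R) *\<^sub>R u" by (simp add: algebra_simps)
      then show ?thesis using u t by (simp add: dist_norm)
    qed
    then have "dist (b + t *\<^sub>R u) y \<le> R - t + \<delta>"
      using dist_triangle[of "b + t *\<^sub>R u" y "b + R *\<^sub>R u"] \<delta>_def by simp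
    also have "\<dots> < t" using t by simp
    finally have "dist (b + t *\<^sub>R u) y < t" .
    moreover have "infdist (b + t *\<^sub>R u) A \<le> dist (b + t *\<^sub>R u) y" by (rule infdist_le[OF yA])
    ultimately show False using dt by simp
  qed
  then show ?thesis by auto
qed

lemma normal_ball:
  fixes A :: "'a::euclidean_space set"
  assumes cl: "closed A" "A \<noteq> {}" and H: "\<forall>x. infdist x A < R \<longrightarrow> x \<in> Unp A"
    and x: "x \<notin> A" "infdist x A < R"
  shows "norm ((1 / infdist x A) *\<^sub>R (x - xi A x)) = 1"
    "ball (xi A x + R *\<^sub>R ((1 / infdist x A) *\<^sub>R (x - xi A x))) R \<inter> A = {}"
proof -
  define s where "s = infdist x A"
  have s: "s > 0" unfolding s_def by (rule infdist_pos_not_in_closed[OF cl x(1)])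
  have xp: "xi A x \<in> A" "s = dist x (xi A x)" using xi_prop[OF cl, of x] s_def by auto
  define u where "u = (1 / s) *\<^sub>R (x - xi A x)"
  have nu: "norm u = 1" unfolding u_def using xp s by (simp add: dist_norm)
  have xu: "xi A x + s *\<^sub>R u = x" unfolding u_def using s by simp
  show "norm ((1 / infdist x A) *\<^sub>R (x - xi A x)) = 1" using nu unfolding u_def s_def .
  have "ball (xi A x + R *\<^sub>R u) R \<inter> A = {}"
    by (rule ray_ball[OF cl H xp(1) nu s]) (use x s_def xu in auto)
  then show "ball (xi A x + R *\<^sub>R ((1 / infdist x A) *\<^sub>R (x - xi A x))) R \<inter> A = {}"
    unfolding u_def s_def .
qed


lemma ball_limit:
  fixes A :: "'a::euclidean_space set"
  assumes R: "R > 0"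
    and L: "\<And>e. e > 0 \<Longrightarrow> \<exists>b c. dist b a < e \<and> dist c v < e \<and> ball (b + R *\<^sub>R c) R \<inter> A = {}"
  shows "ball (a + R *\<^sub>R v) R \<inter> A = {}"
proof -
  have "y \<notin> A" if y: "y \<in> ball (a + R *\<^sub>R v) R" for y
  proof
    assume yA: "y \<in> A"
    define \<delta> where "\<delta> = dist (a + R *\<^sub>R v) y"
    have dl: "\<delta> < R" using y unfolding \<delta>_def by auto
    define e where "e = (R - \<delta>) / (1 + R)"
    have e: "e > 0" unfolding e_def using dl R by simp
    obtain b c where bc: "dist b a < e" "dist c v < e" "ball (b + R *\<^sub>R c) R \<inter> A = {}" using L[OF e] by blast
    have "dist (b + R *\<^sub>R c) (a + R *\<^sub>R v) \<le> dist b a + dist (R *\<^sub>R c) (R *\<^sub>R v)"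
      by (simp add: dist_norm) (metis add_diff_add norm_triangle_ineq4 diff_minus_eq_add add_uminus_conv_diff norm_diff_triangle_ineq)
    also have "dist (R *\<^sub>R c) (R *\<^sub>R v) = R * dist c v" using R
      by (simp add: dist_norm scaleR_diff_right[symmetric])
    finally have "dist (b + R *\<^sub>R c) (a + R *\<^sub>R v) \<le> dist b a + R * dist c v" .
    moreover have "R * dist c v \<le> R * e" using bc(2) R by simp
    moreover have "e + R * e = R - \<delta>"
    proof -
      have "e + R * e = e * (1 + R)" by (simp add: algebra_simps)
      also have "\<dots> = R - \<delta>" unfolding e_def using R by simp
      finally show ?thesis .
    qed
    ultimately have "dist (b + R *\<^sub>R c) (a + R *\<^sub>R v) < R - \<delta>" using bc(1) by linarith
    then have "dist (b + R *\<^sub>R c) y < R"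
      using dist_triangle[of "b + R *\<^sub>R c" y "a + R *\<^sub>R v"] \<delta>_def by simp
    then show False using bc(3) yA by auto
  qed
  then show ?thesis by auto
qed

lemma unit_approx:
  fixes v d :: "'a::euclidean_space"
  assumes v: "norm v = 1" and t: "t > 0"
  shows "norm ((1 / norm (t *\<^sub>R v - d)) *\<^sub>R (t *\<^sub>R v - d) - v) \<le> 2 * norm d / t"
proof -
  define q where "q = t *\<^sub>R v - d"
  have "norm ((1 / norm q) *\<^sub>R q - v) \<le> norm ((1 / norm q) *\<^sub>R q - (1/t) *\<^sub>R q) + norm ((1/t) *\<^sub>R q - v)"
    using norm_triangle_ineq[of "(1 / norm q) *\<^sub>R q - (1/t) *\<^sub>R q" "(1/t) *\<^sub>R q - v"] by simp
  also have "norm ((1/t) *\<^sub>R q - v) = norm d / t"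
  proof -
    have "(1/t) *\<^sub>R q - v = - ((1/t) *\<^sub>R d)" unfolding q_def using t by (simp add: algebra_simps)
    then show ?thesis using t by simp
  qed
  also have "norm ((1 / norm q) *\<^sub>R q - (1/t) *\<^sub>R q) \<le> norm d / t"
  proof (cases "q = 0")
    case True
    then show ?thesis using t by simp
  next
    case False
    have "(1 / norm q) *\<^sub>R q - (1/t) *\<^sub>R q = (1 / norm q - 1/t) *\<^sub>R q" by (simp add: algebra_simps)
    then have "norm ((1 / norm q) *\<^sub>R q - (1/t) *\<^sub>R q) = \<bar>1 / norm q - 1/t\<bar> * norm q" by simp
    also have "\<dots> = \<bar>t - norm q\<bar> / t"
    proof -
      have nq: "norm q > 0" using False by simp
      have "1 / norm q - 1/t = (t - norm q) / (norm q * t)" using nq t by (simp add: field_simps)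
      then have "\<bar>1 / norm q - 1/t\<bar> = \<bar>t - norm q\<bar> / (norm q * t)" using nq t by (simp add: abs_divide)
      then show ?thesis using nq t by simp
    qed
    also have "\<bar>t - norm q\<bar> \<le> norm d"
    proof -
      have "norm (t *\<^sub>R v) = t" using v t by simp
      moreover have "\<bar>norm (t *\<^sub>R v) - norm q\<bar> \<le> norm (t *\<^sub>R v - q)" by (rule norm_triangle_ineq3)
      moreover have "t *\<^sub>R v - q = d" unfolding q_def by simp
      ultimately show ?thesis by simp
    qed
    then have "\<bar>t - norm q\<bar> / t \<le> norm d / t" using t by (simp add: divide_right_mono)
    finally show ?thesis .
  qed
  then have "norm ((1 / norm q) *\<^sub>R q - (1/t) *\<^sub>R q) + norm d / t \<le> 2 * norm d / t" by simp
  finally show ?thesis unfolding q_def .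
qed


lemma supported:
  fixes A :: "'a::euclidean_space set"
  assumes cl: "closed A" "A \<noteq> {}" and H: "\<forall>x. infdist x A < R \<longrightarrow> x \<in> Unp A" and R: "R > 0"
    and a: "a \<in> frontier A"
  shows "NR R A a \<noteq> {}"
proof -
  have ni: "a \<notin> interior A" using a unfolding frontier_def by auto
  have "\<forall>n. \<exists>x. x \<notin> A \<and> dist x a < min R (1 / Suc n)"
  proof
    fix n
    have "min R (1 / Suc n) > 0" using R by simp
    then have "\<not> ball a (min R (1 / Suc n)) \<subseteq> A" using ni mem_interior by blast
    then show "\<exists>x. x \<notin> A \<and> dist x a < min R (1 / Suc n)" by (auto simp: dist_commute)
  qed
  then obtain X where X: "\<And>n. X n \<notin> A" "\<And>n. dist (X n) a < min R (1 / Suc n)" by metis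
  have aA: "a \<in> A" using a cl(1) frontier_subset_closed by blast
  have dX: "infdist (X n) A \<le> dist (X n) a" for n using infdist_le[OF aA] .
  have dXR: "infdist (X n) A < R" for n using dX[of n] X(2)[of n] by simp
  define u where "u n = (1 / infdist (X n) A) *\<^sub>R (X n - xi A (X n))" for n
  have nu: "norm (u n) = 1" for n unfolding u_def by (rule normal_ball(1)[OF cl H X(1) dXR])
  have bu: "ball (xi A (X n) + R *\<^sub>R u n) R \<inter> A = {}" for n
    unfolding u_def by (rule normal_ball(2)[OF cl H X(1) dXR])
  obtain w where w: "norm w = 1" "\<And>e N. e > 0 \<Longrightarrow> \<exists>n\<ge>N. dist (u n) w < e"
    using sphere_cluster[of u, OF nu] by blast
  have "ball (a + R *\<^sub>R w) R \<inter> A = {}"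
  proof (rule ball_limit[OF R])
    fix e :: real assume e: "e > 0"
    obtain N :: nat where N: "2 / e < N" using reals_Archimedean2 by blast
    obtain n where n: "n \<ge> N" "dist (u n) w < e" using w(2)[OF e, of N] by blast
    have xp: "dist (X n) (xi A (X n)) = infdist (X n) A" using xi_prop[OF cl, of "X n"] by simp
    have "dist (xi A (X n)) a \<le> dist (xi A (X n)) (X n) + dist (X n) a" by (rule dist_triangle)
    also have "\<dots> \<le> 2 * dist (X n) a" using xp dX[of n] by (simp add: dist_commute)
    also have "\<dots> < 2 * (1 / Suc n)" using X(2)[of n] by simp
    also have "\<dots> \<le> e"
    proof -
      have "2 / e < Suc n" using N n(1) by linarith
      then show ?thesis using e by (simp add: field_simps)
    qed
    finally have "dist (xi A (X n)) a < e" .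
    then show "\<exists>b c. dist b a < e \<and> dist c w < e \<and> ball (b + R *\<^sub>R c) R \<inter> A = {}"
      using n(2) bu[of n] by blast
  qed
  then have "w \<in> NR R A a" unfolding NR_def using w(1) by (simp add: Int_commute)
  then show ?thesis by auto
qed



lemma key_ineq:
  fixes dl q v :: "'a::euclidean_space"
  assumes q: "norm q = \<rho>" "\<rho> > 0" "\<rho> \<le> R" "R > 0" "q = t *\<^sub>R v - dl"
    and D: "R \<le> norm (dl + (R / \<rho>) *\<^sub>R q)"
  shows "(norm dl)^2 \<le> 2 * t * inner dl v"
proof -
  have "R^2 \<le> (norm (dl + (R / \<rho>) *\<^sub>R q))^2" using D q(4) by (intro power_mono) auto
  also have "\<dots> = (norm dl)^2 + 2 * (R / \<rho>) * inner dl q + R^2"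
  proof -
    have "(norm ((R / \<rho>) *\<^sub>R q))^2 = R^2" using q by (simp add: power_mult_distrib power_divide)
    then show ?thesis unfolding nsq_add by simp
  qed
  finally have "0 \<le> (norm dl)^2 + 2 * (R / \<rho>) * inner dl q" by simp
  moreover have "inner dl q = t * inner dl v - (norm dl)^2"
    unfolding q(5) by (simp add: inner_diff_right power2_norm_eq_inner)
  ultimately have "0 \<le> (norm dl)^2 + 2 * (R / \<rho>) * (t * inner dl v - (norm dl)^2)" by simp
  then have "0 \<le> \<rho> * ((norm dl)^2 + 2 * (R / \<rho>) * (t * inner dl v - (norm dl)^2))" using q(2) by simp
  also have "\<dots> = \<rho> * (norm dl)^2 + 2 * R * (t * inner dl v - (norm dl)^2)" using q(2) by (simp add: field_simps)
  finally have 1: "0 \<le> \<rho> * (norm dl)^2 + 2 * R * (t * inner dl v - (norm dl)^2)" .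
  have "\<rho> * (norm dl)^2 \<le> R * (norm dl)^2" using q(3) by (simp add: mult_right_mono)
  with 1 have "0 \<le> R * (2 * t * inner dl v - (norm dl)^2)" by (simp add: algebra_simps)
  then show ?thesis using q(4) by (simp add: zero_le_mult_iff)
qed


lemma nor_NR:
  fixes A :: "'a::euclidean_space set"
  assumes cl: "closed A" "A \<noteq> {}" and H: "\<forall>x. infdist x A < R \<longrightarrow> x \<in> Unp A" and R: "R > 0"
    and aA: "a \<in> A" and v: "norm v = 1" and vN: "v \<in> Nor A a"
  shows "ball (a + R *\<^sub>R v) R \<inter> A = {}"
proof -
  have "v \<notin> Tan A a"
  proof
    assume "v \<in> Tan A a"
    then have "inner v v \<le> 0" using vN unfolding Nor_def by auto
    then show False using v by (simp add: power2_norm_eq_inner[symmetric])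
  qed
  then obtain e0 where e0: "e0 > 0"
    and e0': "\<And>x r. x \<in> A \<Longrightarrow> norm (x - a) < e0 \<Longrightarrow> r > 0 \<Longrightarrow> \<not> norm (r *\<^sub>R (x - a) - v) < e0"
    unfolding Tan_def by auto
  have notA: "a + t *\<^sub>R v \<notin> A" if "0 < t" "t < e0" for t
  proof
    assume "a + t *\<^sub>R v \<in> A"
    moreover have "norm ((a + t *\<^sub>R v) - a) < e0" using that v by simp
    moreover have "(1/t) *\<^sub>R ((a + t *\<^sub>R v) - a) = v" using that by simp
    ultimately show False using e0'[of "a + t *\<^sub>R v" "1/t"] that e0 by simp
  qed
  define t1 where "t1 = min e0 R / 2"
  have t1: "t1 > 0" "t1 < e0" "t1 < R" unfolding t1_def using e0 R by auto
  define tn where "tn n = t1 / Suc n" for n :: nat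
  have tn: "tn n > 0" "tn n \<le> t1" for n unfolding tn_def using t1 by (auto simp: field_simps)
  define X where "X n = a + tn n *\<^sub>R v" for n
  have XA: "X n \<notin> A" for n unfolding X_def using notA tn[of n] t1 by auto
  have dXa: "dist (X n) a = tn n" for n unfolding X_def using v tn[of n] by (simp add: dist_norm)
  have dX: "infdist (X n) A \<le> tn n" for n using infdist_le[OF aA, of "X n"] dXa by simp
  have dXR: "infdist (X n) A < R" for n using dX[of n] tn[of n] t1 by linarith
  define bb where "bb n = xi A (X n)" for n
  define dl where "dl n = bb n - a" for n
  define rho where "rho n = infdist (X n) A" for n
  define q where "q n = tn n *\<^sub>R v - dl n" for n
  have bbA: "bb n \<in> A" and rho_eq: "rho n = dist (X n) (bb n)" for n
    using xi_prop[OF cl, of "X n"] unfolding bb_def rho_def by auto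
  have Xb: "X n - bb n = q n" for n unfolding q_def dl_def X_def by (simp add: algebra_simps)
  have nq: "norm (q n) = rho n" for n using rho_eq[of n] Xb[of n] by (simp add: dist_norm)
  have rpos: "rho n > 0" for n unfolding rho_def by (rule infdist_pos_not_in_closed[OF cl XA])
  have rle: "rho n \<le> tn n" for n unfolding rho_def by (rule dX)
  define u where "u n = (1 / infdist (X n) A) *\<^sub>R (X n - xi A (X n))" for n
  have u_eq: "u n = (1 / norm (q n)) *\<^sub>R q n" for n
    unfolding u_def using Xb[of n] nq[of n] unfolding bb_def rho_def by simp
  have bu: "ball (bb n + R *\<^sub>R u n) R \<inter> A = {}" for n
    unfolding u_def bb_def by (rule normal_ball(2)[OF cl H XA dXR])
  have key: "(norm (dl n))^2 \<le> 2 * tn n * inner (dl n) v" for n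
  proof (rule key_ineq[OF nq rpos _ R q_def])
    show "rho n \<le> R" using rle[of n] tn[of n] t1 by linarith
    have "a \<notin> ball (bb n + R *\<^sub>R u n) R" using bu[of n] aA by blast
    then have "R \<le> dist (bb n + R *\<^sub>R u n) a" by simp
    also have "bb n + R *\<^sub>R u n - a = dl n + (R / rho n) *\<^sub>R q n"
      unfolding u_eq nq dl_def by (simp add: algebra_simps)
    then have "dist (bb n + R *\<^sub>R u n) a = norm (dl n + (R / rho n) *\<^sub>R q n)" by (simp add: dist_norm)
    finally show "R \<le> norm (dl n + (R / rho n) *\<^sub>R q n)" .
  qed
  have dlb: "norm (dl n) \<le> 2 * tn n" for n
  proof -
    have "norm (dl n) = dist (bb n) a" unfolding dl_def by (simp add: dist_norm)
    also have "\<dots> \<le> dist (bb n) (X n) + dist (X n) a" by (rule dist_triangle)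
    also have "\<dots> \<le> 2 * tn n" using rho_eq[of n] rle[of n] dXa[of n] by (simp add: dist_commute)
    finally show ?thesis .
  qed
  have uv: "dist (u n) v \<le> 2 * norm (dl n) / tn n" for n
    unfolding u_eq q_def dist_norm using unit_approx[OF v tn(1)[of n]] by simp
  have tnM: "tn n < e" if "n \<ge> M" "t1 / e < real M" "e > 0" for n M :: nat and e :: real
  proof -
    have "t1 / e < Suc n" using that by linarith
    then have "t1 < e * Suc n" using that(3) by (simp add: field_simps)
    then show ?thesis unfolding tn_def by (simp add: field_simps)
  qed
  have stepA: "\<exists>n\<ge>N. norm (dl n) \<le> \<eta> * tn n" if eta: "\<eta> > 0" for \<eta> N
  proof (rule ccontr)
    assume "\<not> (\<exists>n\<ge>N. norm (dl n) \<le> \<eta> * tn n)"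
    then have big: "norm (dl n) > \<eta> * tn n" if "n \<ge> N" for n using that by auto
    define f where "f n = (1 / norm (dl (n + N))) *\<^sub>R dl (n + N)" for n
    have dpos: "norm (dl (n + N)) > 0" for n using big[of "n + N"] eta tn[of "n + N"]
      by (smt (verit) mult_pos_pos le_add2)
    have nf: "norm (f n) = 1" for n unfolding f_def using dpos[of n] by simp
    have fi: "inner (f n) v > \<eta> / 2" for n
    proof -
      define m where "m = n + N"
      have dp: "norm (dl m) > 0" using dpos m_def by simp
      have bg: "norm (dl m) > \<eta> * tn m" using big[of m] m_def by simp
      have k: "(norm (dl m))^2 \<le> 2 * tn m * inner (dl m) v" by (rule key)
      have "inner (f n) v = inner (dl m) v / norm (dl m)" unfolding f_def m_def[symmetric] by simp
      moreover have "inner (dl m) v / norm (dl m) \<ge> norm (dl m) / (2 * tn m)"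
        using k dp tn[of m] by (simp add: field_simps power2_eq_square)
      moreover have "norm (dl m) / (2 * tn m) > \<eta> / 2"
        using bg tn[of m] by (simp add: field_simps)
      ultimately show ?thesis by linarith
    qed
    obtain w where w: "norm w = 1" "\<And>e N. e > 0 \<Longrightarrow> \<exists>n\<ge>N. dist (f n) w < e"
      using sphere_cluster[of f, OF nf] by blast
    have wv: "inner w v \<ge> \<eta> / 2"
    proof (rule ccontr)
      assume "\<not> inner w v \<ge> \<eta> / 2"
      then have ep: "\<eta> / 2 - inner w v > 0" by simp
      obtain n where n: "dist (f n) w < \<eta> / 2 - inner w v" using w(2)[OF ep, of 0] by blast
      have "inner (f n) v - inner w v = inner (f n - w) v" by (simp add: inner_diff_left)
      also have "\<dots> \<le> norm (f n - w) * norm v" by (rule norm_cauchy_schwarz)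
      also have "\<dots> = dist (f n) w" using v by (simp add: dist_norm)
      finally show False using n fi[of n] by linarith
    qed
    have "w \<in> Tan A a"
      unfolding Tan_def mem_Collect_eq
    proof (intro allI impI)
      fix \<epsilon> :: real assume ep: "\<epsilon> > 0"
      obtain M :: nat where M: "2 * t1 / \<epsilon> < M" using reals_Archimedean2 by blast
      obtain n where n: "n \<ge> M" "dist (f n) w < \<epsilon>" using w(2)[OF ep, of M] by blast
      define m where "m = n + N"
      have "tn m < \<epsilon> / 2"
        by (rule tnM) (use M ep m_def n(1) in \<open>auto simp: field_simps\<close>)
      then have "norm (bb m - a) < \<epsilon>" using dlb[of m] unfolding dl_def by simp
      moreover have "(1 / norm (dl m)) *\<^sub>R (bb m - a) = f n" unfolding f_def m_def dl_def by simp
      moreover have "1 / norm (dl m) > 0" using dpos[of n] m_def by simp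
      ultimately show "\<exists>x\<in>A. norm (x - a) < \<epsilon> \<and> (\<exists>r>0. norm (r *\<^sub>R (x - a) - w) < \<epsilon>)"
        using bbA[of m] n(2) by (metis dist_norm)
    qed
    then have "inner v w \<le> 0" using vN unfolding Nor_def by auto
    then show False using wv eta by (simp add: inner_commute)
  qed
  show ?thesis
  proof (rule ball_limit[OF R])
    fix e :: real assume e: "e > 0"
    define \<eta> where "\<eta> = min 1 (e / 3)"
    have eta: "\<eta> > 0" "\<eta> \<le> 1" "\<eta> \<le> e / 3" unfolding \<eta>_def using e by auto
    obtain M :: nat where M: "t1 / e < M" using reals_Archimedean2 by blast
    obtain n where n: "n \<ge> M" "norm (dl n) \<le> \<eta> * tn n" using stepA[OF eta(1)] by blast
    have te: "tn n < e" by (rule tnM[OF n(1) M e])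
    have "\<eta> * tn n \<le> tn n" using eta tn[of n] by simp
    then have "dist (bb n) a < e" using n(2) te unfolding dl_def by (simp add: dist_norm)
    moreover have "dist (u n) v < e"
    proof -
      have "2 * norm (dl n) / tn n \<le> 2 * \<eta>" using n(2) tn[of n] by (simp add: field_simps)
      then show ?thesis using uv[of n] eta by linarith
    qed
    ultimately show "\<exists>b c. dist b a < e \<and> dist c v < e \<and> ball (b + R *\<^sub>R c) R \<inter> A = {}"
      using bu[of n] by blast
  qed
qed


theorem mainTheorem7:
  fixes A :: "'a::euclidean_space set" and R :: real
  assumes "DIM('a) \<ge> 2" and "R > 0" and "body A"
  shows "(R_supported R A \<and>
          (\<forall>a\<in>frontier A. Nor A a \<inter> sphere 0 1 = NR R A a))
         \<longleftrightarrow> reach A \<ge> ereal R"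
proof -
  have cl: "closed A" "A \<noteq> {}" using assms(3) unfolding body_def by auto
  show ?thesis
  proof
    assume "R_supported R A \<and> (\<forall>a\<in>frontier A. Nor A a \<inter> sphere 0 1 = NR R A a)"
    then have "\<forall>x. infdist x A < R \<longrightarrow> x \<in> Unp A" using i_to_H[OF assms(3,2)] by blast
    then show "reach A \<ge> ereal R" using reach_iff[OF assms(3,2)] by blast
  next
    assume "reach A \<ge> ereal R"
    then have H: "\<forall>x. infdist x A < R \<longrightarrow> x \<in> Unp A" using reach_iff[OF assms(3,2)] by blast
    have sup: "R_supported R A" unfolding R_supported_def
      using assms(3) supported[OF cl H assms(2)] by blast
    have "Nor A a \<inter> sphere 0 1 = NR R A a" if a: "a \<in> frontier A" for a
    proof
      have aA: "a \<in> A" using a cl(1) frontier_subset_closed by blast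
      show "Nor A a \<inter> sphere 0 1 \<subseteq> NR R A a"
      proof
        fix v assume "v \<in> Nor A a \<inter> sphere 0 1"
        then have vN: "v \<in> Nor A a" and v1: "norm v = 1" by auto
        have "ball (a + R *\<^sub>R v) R \<inter> A = {}" by (rule nor_NR[OF cl H assms(2) aA v1 vN])
        then show "v \<in> NR R A a" unfolding NR_def using v1 by (simp add: Int_commute)
      qed
      show "NR R A a \<subseteq> Nor A a \<inter> sphere 0 1"
      proof
        fix v assume "v \<in> NR R A a"
        then have v1: "norm v = 1" and B: "ball (a + R *\<^sub>R v) R \<inter> A = {}"
          unfolding NR_def by (auto simp: Int_commute)
        have "v \<in> Nor A a" by (rule NR_Nor[OF assms(2) v1 B])
        then show "v \<in> Nor A a \<inter> sphere 0 1" using v1 by simp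
      qed
    qed
    then show "R_supported R A \<and> (\<forall>a\<in>frontier A. Nor A a \<inter> sphere 0 1 = NR R A a)"
      using sup by blast
  qed
qed

end
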